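(* Let $n$ be odd and $f:\mathbb{F}_{2^n}\to\mathbb{F}_{2^n}$ be almost bent, and let $k=\max\{\omega(a): a\in\mathbb{F}_{2^n}\}$. Then \[|\mathrm{Im}(f)|\leq 2^n-\frac{k-1}{k}2^{(n+1)/2}.\] In particular, if $f$ is not a permutation, then $|\mathrm{Im}(f)|\leq 2^n-2^{(n-1)/2}$.
   Context: $\mathrm{Tr}$ is the absolute trace, $W_f(b,a)=\sum_{x}(-1)^{\mathrm{Tr}(bf(x)+ax)}$. For $n$ odd, $f$ is almost bent if $W_f(b,a)\in\{0,\pm2^{(n+1)/2}\}$ for all $b\in\mathbb{F}_{2^n}^*$, $a\in\mathbb{F}_{2^n}$. $\omega(a)=|f^{-1}(\{a\})|$. *)

theory Defs
  imports Complex_Main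
begin

text \<open>The finite field F_{2^n} is modelled as an arbitrary finite field type 'a
with CARD('a) = 2^n (unique up to isomorphism).\<close>

definition abs_trace :: "nat \<Rightarrow> 'a::field \<Rightarrow> 'a" where
  "abs_trace n x = (\<Sum>i<n. x ^ (2 ^ i))"

text \<open>(-1)^{Tr(y)}, where Tr(y) is 0 or 1 in F_2.\<close>
definition tr_sign :: "nat \<Rightarrow> 'a::field \<Rightarrow> int" where
  "tr_sign n y = (if abs_trace n y = 0 then 1 else -1)"

definition walsh :: "nat \<Rightarrow> ('a::{field,finite} \<Rightarrow> 'a) \<Rightarrow> 'a \<Rightarrow> 'a \<Rightarrow> int" where
  "walsh n f b a = (\<Sum>x\<in>UNIV. tr_sign n (b * f x + a * x))"

definition almost_bent :: "nat \<Rightarrow> ('a::{field,finite} \<Rightarrow> 'a) \<Rightarrow> bool" where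
  "almost_bent n f \<longleftrightarrow>
     (\<forall>b a. b \<noteq> 0 \<longrightarrow> walsh n f b a \<in> {0, 2 ^ ((n + 1) div 2), - (2 ^ ((n + 1) div 2))})"

definition omega :: "('a \<Rightarrow> 'b) \<Rightarrow> 'b \<Rightarrow> nat" where
  "omega f a = card (f -` {a})"

end

theory Submission imports Defs "HOL-Number_Theory.Residues" "HOL-Computational_Algebra.Polynomial" "HOL-Computational_Algebra.Primes"
begin

lemma char2:
  assumes "card (UNIV :: 'a::{field,finite} set) = 2 ^ n"
  shows "CHAR('a) = 2"
proof -
  have pos: "CHAR('a) > 0" by (rule finite_imp_CHAR_pos) simp
  have pr: "prime CHAR('a)" using prime_CHAR_semidom[OF pos] .
  have "CHAR('a) dvd 2 ^ n" using CHAR_dvd_CARD[where 'a='a] assms by simp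
  hence "CHAR('a) dvd 2" using pr prime_dvd_power by blast
  thus ?thesis using dvd_imp_le[OF \<open>CHAR('a) dvd 2\<close>] prime_gt_1_nat[OF pr] by simp
qed

lemma one_one:
  assumes "card (UNIV :: 'a::{field,finite} set) = 2 ^ n"
  shows "(1::'a) + 1 = 0"
proof -
  have "of_nat CHAR('a) = (0::'a)" by simp
  thus ?thesis using char2[OF assms] by simp
qed

lemma xx0:
  assumes "card (UNIV :: 'a::{field,finite} set) = 2 ^ n"
  shows "(x::'a) + x = 0"
proof -
  have "x + x = x * (1 + 1)" by (simp add: algebra_simps)
  thus ?thesis using one_one[OF assms] by simp
qed

lemma add_eq0_iff:
  assumes "card (UNIV :: 'a::{field,finite} set) = 2 ^ n"
  shows "((x::'a) + y = 0) = (x = y)"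
  by (metis add_right_cancel assms xx0)

lemma frob:
  assumes "card (UNIV :: 'a::{field,finite} set) = 2 ^ n"
  shows "((x::'a) + y) ^ (2 ^ i) = x ^ (2^i) + y ^ (2^i)"
  by (rule freshmans_dream') (auto simp: char2[OF assms])

lemma pow_card:
  fixes x :: "'a :: {field,finite}"
  shows   "x ^ card (UNIV :: 'a set) = x"
proof (cases "x = 0")
  case False
  have "x * (\<Prod>y\<in>UNIV-{0}. x * y) = x * x ^ (card (UNIV :: 'a set) - 1) * \<Prod>(UNIV-{0})"
    by (simp add: prod.distrib mult_ac)
  also have "x * x ^ (card (UNIV :: 'a set) - 1) = x ^ Suc (card (UNIV :: 'a set) - 1)"
    by (subst power_Suc) auto
  also have "Suc (card (UNIV :: 'a set) - 1) = card (UNIV :: 'a set)"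
    using finite_UNIV_card_ge_0[where ?'a = 'a] by simp
  also have "(\<Prod>y\<in>UNIV-{0}. x * y) = (\<Prod>y\<in>UNIV-{0}. y)"
    by (rule prod.reindex_bij_witness[of _ "\<lambda>y. y / x" "\<lambda>y. x * y"]) (use False in auto)
  finally show ?thesis
    by simp
qed (use finite_UNIV_card_ge_0[where ?'a = 'a] in auto)

lemma trace_add:
  "abs_trace n ((x::'a::{field,finite}) + y) = abs_trace n x + abs_trace n y"
  if "card (UNIV :: 'a set) = 2 ^ n"
  unfolding abs_trace_def by (simp add: frob[OF that] sum.distrib)

lemma trace_sq:
  assumes "card (UNIV :: 'a::{field,finite} set) = 2 ^ n"
  shows "(abs_trace n (x::'a)) ^ 2 = abs_trace n x"
proof -
  have "(abs_trace n x) ^ 2 = (\<Sum>i<n. (x ^ (2^i)) ^ 2)"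
    unfolding abs_trace_def by (rule freshmans_dream_sum) (auto simp: char2[OF assms])
  also have "\<dots> = (\<Sum>i<n. x ^ (2 ^ Suc i))"
    by (simp add: power_mult[symmetric] mult.commute)
  also have "\<dots> = abs_trace n x"
  proof -
    have "(\<Sum>i<Suc n. x ^ (2 ^ i)) = x ^ (2^0) + (\<Sum>i<n. x ^ (2 ^ Suc i))"
      by (rule sum.lessThan_Suc_shift)
    moreover have "(\<Sum>i<Suc n. x ^ (2 ^ i)) = abs_trace n x + x ^ (2^n)"
      by (simp add: abs_trace_def)
    moreover have "x ^ (2^n) = x" using pow_card[of x] assms by simp
    ultimately show ?thesis by simp
  qed
  finally show ?thesis .
qed

lemma trace01:
  assumes "card (UNIV :: 'a::{field,finite} set) = 2 ^ n"
  shows "abs_trace n (x::'a) = 0 \<or> abs_trace n x = 1"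
proof -
  let ?t = "abs_trace n x"
  have "?t * (?t - 1) = 0" using trace_sq[OF assms, of x] by (simp add: algebra_simps power2_eq_square)
  thus ?thesis by simp
qed

lemma tr_sign_add:
  assumes "card (UNIV :: 'a::{field,finite} set) = 2 ^ n"
  shows "tr_sign n ((x::'a) + y) = tr_sign n x * tr_sign n y"
  using trace01[OF assms, of x] trace01[OF assms, of y] one_one[OF assms]
  unfolding tr_sign_def trace_add[OF assms] by auto

lemma tr_sign_sq: "tr_sign n x * tr_sign n x = 1"
  unfolding tr_sign_def by auto

lemma tr_sign_abs: "\<bar>tr_sign n x\<bar> = 1"
  unfolding tr_sign_def by auto

lemma trace_nonzero:
  assumes "card (UNIV :: 'a::{field,finite} set) = 2 ^ n" "n > 0"
  shows "\<exists>c::'a. abs_trace n c \<noteq> 0"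
proof (rule ccontr)
  assume "\<not> ?thesis"
  hence all: "\<forall>c::'a. abs_trace n c = 0" by simp
  define p :: "'a poly" where "p = (\<Sum>i<n. monom 1 (2^i))"
  have ev: "poly p x = abs_trace n x" for x
    unfolding p_def abs_trace_def by (simp add: poly_sum poly_monom)
  have "coeff p (2^(n-1)) = (\<Sum>i<n. if 2^i = (2::nat)^(n-1) then 1 else 0)"
    unfolding p_def by (simp add: coeff_sum)
  also have "\<dots> = (\<Sum>i\<in>{n-1}. 1)"
  proof -
    have "(\<Sum>i<n. if 2^i = (2::nat)^(n-1) then 1 else (0::'a)) = (\<Sum>i<n. if i = n-1 then 1 else 0)"
      by (intro sum.cong) auto
    also have "\<dots> = 1" using assms(2) by (simp add: sum.delta)
    finally show ?thesis by simp
  qed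
  finally have "coeff p (2^(n-1)) \<noteq> 0" by simp
  hence pnz: "p \<noteq> 0" by auto
  have "degree p \<le> 2^(n-1)"
    unfolding p_def
  proof (rule degree_sum_le)
    fix i assume "i \<in> {..<n}"
    hence "(2::nat)^i \<le> 2^(n-1)" by (intro power_increasing) auto
    thus "degree (monom (1::'a) (2^i)) \<le> 2^(n-1)" using degree_monom_le order_trans by blast
  qed simp
  moreover have "card {x. poly p x = 0} \<le> degree p" by (rule card_poly_roots_bound[OF pnz])
  moreover have "{x. poly p x = 0} = UNIV" using all ev by auto
  ultimately have "(2::nat)^n \<le> 2^(n-1)" using assms(1) by (metis le_trans)
  moreover have "(2::nat)^(n-1) < 2^n" using assms(2) by (intro power_strict_increasing) auto
  ultimately show False using assms(2) by simp
qed

lemma trace0: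
  assumes "n > 0"
  shows "abs_trace n (0::'a::field) = 0"
  unfolding abs_trace_def by (simp add: power_0_left)

lemma sum_sign:
  assumes "card (UNIV :: 'a::{field,finite} set) = 2 ^ n" "n > 0"
  shows "(\<Sum>c\<in>UNIV. tr_sign n (b * (c::'a))) = (if b = 0 then 2^n else 0)"
proof (cases "b = 0")
  case True
  then show ?thesis using assms trace0[OF assms(2)] by (simp add: tr_sign_def)
next
  case False
  have r: "(\<Sum>c\<in>UNIV. tr_sign n (b * (c::'a))) = (\<Sum>c\<in>UNIV. tr_sign n (c::'a))"
    by (rule sum.reindex_bij_witness[where i="\<lambda>y. y / b" and j="\<lambda>y. b * y"]) (use False in auto)
  obtain c1 :: 'a where c1: "abs_trace n c1 \<noteq> 0" using trace_nonzero[OF assms] by blast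
  have s1: "tr_sign n c1 = -1" using c1 by (simp add: tr_sign_def)
  have "(\<Sum>c\<in>UNIV. tr_sign n (c::'a)) = (\<Sum>c\<in>UNIV. tr_sign n (c + c1))"
    by (rule sum.reindex_bij_witness[where i="\<lambda>y. y + c1" and j="\<lambda>y. y - c1"]) auto
  also have "\<dots> = - (\<Sum>c\<in>UNIV. tr_sign n (c::'a))"
    by (simp add: tr_sign_add[OF assms(1)] s1 sum_negf)
  finally have "(\<Sum>c\<in>UNIV. tr_sign n (c::'a)) = 0" by simp
  then show ?thesis using r False by simp
qed


lemma sign_mult:
  assumes "card (UNIV :: 'a::{field,finite} set) = 2 ^ n"
  shows "tr_sign n (b * (c::'a)) * tr_sign n (b * d) = tr_sign n ((c + d) * b)"
  by (simp add: tr_sign_add[OF assms, symmetric] algebra_simps)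

lemma fourier_inv:
  fixes g :: "'a::{field,finite} \<Rightarrow> int"
  assumes "card (UNIV :: 'a set) = 2 ^ n" "n > 0"
  shows "(\<Sum>b\<in>UNIV. (\<Sum>c\<in>UNIV. g c * tr_sign n (b * c)) * tr_sign n (b * c0)) = 2^n * g c0"
proof -
  have "(\<Sum>b\<in>UNIV. (\<Sum>c\<in>UNIV. g c * tr_sign n (b * c)) * tr_sign n (b * c0))
      = (\<Sum>b\<in>UNIV. \<Sum>c\<in>UNIV. g c * tr_sign n ((c + c0) * b))"
    by (simp add: sum_distrib_right mult.assoc sign_mult[OF assms(1)])
  also have "\<dots> = (\<Sum>c\<in>UNIV. g c * (\<Sum>b\<in>UNIV. tr_sign n ((c + c0) * b)))"
    by (subst sum.swap) (simp add: sum_distrib_left)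
  also have "\<dots> = (\<Sum>c\<in>UNIV. if c = c0 then g c * 2^n else 0)"
    by (intro sum.cong refl) (simp add: sum_sign[OF assms] add_eq0_iff[OF assms(1)])
  also have "\<dots> = 2^n * g c0" by (simp add: sum.delta' mult.commute)
  finally show ?thesis .
qed

lemma parseval:
  fixes g :: "'a::{field,finite} \<Rightarrow> int"
  assumes "card (UNIV :: 'a set) = 2 ^ n" "n > 0"
  shows "(\<Sum>b\<in>UNIV. (\<Sum>c\<in>UNIV. g c * tr_sign n (b * c))^2) = 2^n * (\<Sum>c\<in>UNIV. (g c)^2)"
proof -
  have "(\<Sum>b\<in>UNIV. (\<Sum>c\<in>UNIV. g c * tr_sign n (b * c))^2)
      = (\<Sum>b\<in>UNIV. \<Sum>c\<in>UNIV. \<Sum>d\<in>UNIV. g c * g d * tr_sign n ((c + d) * b))"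
    apply (simp add: power2_eq_square sum_product)
    apply (intro sum.cong refl)
    apply (simp add: tr_sign_add[OF assms(1)] algebra_simps)
    done
  also have "\<dots> = (\<Sum>c\<in>UNIV. \<Sum>d\<in>UNIV. g c * g d * (\<Sum>b\<in>UNIV. tr_sign n ((c + d) * b)))"
  proof -
    have "(\<Sum>b\<in>UNIV. \<Sum>c\<in>UNIV. \<Sum>d\<in>UNIV. g c * g d * tr_sign n ((c + d) * b))
        = (\<Sum>c\<in>UNIV. \<Sum>b\<in>UNIV. \<Sum>d\<in>UNIV. g c * g d * tr_sign n ((c + d) * b))"
      by (rule sum.swap)
    also have "\<dots> = (\<Sum>c\<in>UNIV. \<Sum>d\<in>UNIV. \<Sum>b\<in>UNIV. g c * g d * tr_sign n ((c + d) * b))"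
      by (intro sum.cong refl sum.swap)
    finally show ?thesis by (simp add: sum_distrib_left)
  qed
  also have "\<dots> = (\<Sum>c\<in>UNIV. \<Sum>d\<in>UNIV. if d = c then g c * g c * 2^n else 0)"
    by (intro sum.cong refl) (auto simp add: sum_sign[OF assms] add_eq0_iff[OF assms(1)])
  also have "\<dots> = 2^n * (\<Sum>c\<in>UNIV. (g c)^2)"
    by (simp add: sum.delta sum_distrib_left power2_eq_square mult.commute)
  finally show ?thesis .
qed

lemma fiber_sum:
  fixes f :: "'a::finite \<Rightarrow> 'b::finite" and h :: "'b \<Rightarrow> int"
  shows "(\<Sum>x\<in>UNIV. h (f x)) = (\<Sum>c\<in>UNIV. int (omega f c) * h c)"
proof -
  have "(\<Sum>c\<in>UNIV. int (omega f c) * h c) = (\<Sum>c\<in>UNIV. \<Sum>x\<in>{x. x \<in> UNIV \<and> f x = c}. h (f x))"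
    by (intro sum.cong refl) (simp add: omega_def vimage_def)
  also have "\<dots> = (\<Sum>x\<in>UNIV. h (f x))"
    by (rule sum.group) auto
  finally show ?thesis by simp
qed


theorem theorem7p2:
  fixes f :: "'a::{field,finite} \<Rightarrow> 'a" and n :: nat
  assumes "card (UNIV :: 'a set) = 2 ^ n"
    and "odd n"
    and "almost_bent n f"
  defines "k \<equiv> Max (range (omega f))"
  shows "real (card (range f)) \<le> 2 ^ n - (real k - 1) / real k * 2 ^ ((n + 1) div 2)
         \<and> (\<not> bij f \<longrightarrow> card (range f) \<le> 2 ^ n - 2 ^ ((n - 1) div 2))"
proof -
  note card = assms(1)
  have npos: "n > 0" using assms(2) by (cases n) auto
  note ca = card npos
  define M :: int where "M = 2 ^ ((n + 1) div 2)"
  define g :: "'a \<Rightarrow> int" where "g c = int (omega f c) - 1" for c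
  define G :: "'a \<Rightarrow> int" where "G b = (\<Sum>c\<in>UNIV. g c * tr_sign n (b * c))" for b
  have sumw: "(\<Sum>c\<in>UNIV. int (omega f c)) = 2 ^ n"
    using fiber_sum[of "\<lambda>_. 1" f] card by simp
  have sumg: "(\<Sum>c\<in>UNIV. g c) = 0"
    using sumw card by (simp add: g_def sum_subtractf)
  have G0: "G 0 = 0"
    using sumg trace0[OF npos, where 'a='a] by (simp add: G_def tr_sign_def)
  have Gw: "G b = walsh n f b 0" if "b \<noteq> 0" for b
  proof -
    have "walsh n f b 0 = (\<Sum>c\<in>UNIV. int (omega f c) * tr_sign n (b * c))"
      unfolding walsh_def using fiber_sum[of "\<lambda>c. tr_sign n (b * c)" f] by simp
    also have "\<dots> = G b + (\<Sum>c\<in>UNIV. tr_sign n (b * c))"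
      by (simp add: G_def g_def algebra_simps sum.distrib sum_subtractf)
    also have "(\<Sum>c\<in>UNIV. tr_sign n (b * c)) = 0" using sum_sign[OF ca] that by simp
    finally show ?thesis by simp
  qed
  have Gsq: "M * \<bar>G b\<bar> = (G b)^2" for b
  proof (cases "b = 0")
    case True then show ?thesis using G0 by simp
  next
    case False
    hence "G b \<in> {0, M, -M}" using Gw[OF False] assms(3) by (simp add: almost_bent_def M_def)
    moreover have "M \<ge> 0" by (simp add: M_def)
    ultimately show ?thesis by (auto simp: power2_eq_square)
  qed
  have fin: "finite (range (omega f))" by simp
  have kmem: "k \<in> range (omega f)" unfolding k_def by (rule Max_in[OF fin]) simp
  then obtain c0 where c0: "omega f c0 = k" by auto
  have kle: "omega f c \<le> k" for c unfolding k_def by (rule Max_ge[OF fin]) simp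
  have wpos: "omega f c \<ge> 1" if "c \<in> range f" for c
  proof -
    from that obtain x where "c = f x" by auto
    hence "x \<in> f -` {c}" by simp
    hence "f -` {c} \<noteq> {}" by blast
    thus ?thesis by (simp add: omega_def card_gt_0_iff Suc_le_eq)
  qed
  have w0: "omega f c = 0" if "c \<notin> range f" for c
  proof -
    have "f -` {c} = {}" using that by auto
    thus ?thesis by (simp add: omega_def)
  qed
  have k1: "k \<ge> 1" using wpos[of "f undefined"] kle[of "f undefined"] by simp
  have "2^n * (int k - 1) = (\<Sum>b\<in>UNIV. G b * tr_sign n (b * c0))"
    using fourier_inv[OF ca, of g c0] c0 by (simp add: G_def g_def)
  also have "\<dots> \<le> (\<Sum>b\<in>UNIV. \<bar>G b\<bar>)"
  proof (rule sum_mono)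
    fix b
    have "G b * tr_sign n (b * c0) \<le> \<bar>G b * tr_sign n (b * c0)\<bar>" by simp
    also have "\<dots> = \<bar>G b\<bar>" by (simp add: abs_mult tr_sign_abs)
    finally show "G b * tr_sign n (b * c0) \<le> \<bar>G b\<bar>" .
  qed
  finally have s1: "2^n * (int k - 1) \<le> (\<Sum>b\<in>UNIV. \<bar>G b\<bar>)" .
  have "M \<ge> 0" by (simp add: M_def)
  hence "M * (2^n * (int k - 1)) \<le> M * (\<Sum>b\<in>UNIV. \<bar>G b\<bar>)"
    using s1 by (rule mult_left_mono[rotated])
  also have "\<dots> = (\<Sum>b\<in>UNIV. (G b)^2)" by (simp add: sum_distrib_left Gsq)
  also have "\<dots> = 2^n * (\<Sum>c\<in>UNIV. (g c)^2)" unfolding G_def by (rule parseval[OF ca])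
  finally have "2^n * (M * (int k - 1)) \<le> 2^n * (\<Sum>c\<in>UNIV. (g c)^2)"
    by (simp add: algebra_simps)
  hence s2: "M * (int k - 1) \<le> (\<Sum>c\<in>UNIV. (g c)^2)" by simp
  define z where "z = card (- range f)"
  have Iz: "card (range f) + z = 2 ^ n"
  proof -
    have "card (range f \<union> - range f) = card (range f) + card (- range f)"
      by (rule card_Un_disjoint) auto
    thus ?thesis using card by (simp add: z_def)
  qed
  have "(\<Sum>c\<in>UNIV. (g c)^2) \<le> (\<Sum>c\<in>UNIV. (int k - 1) * g c + (if c \<in> - range f then int k else 0))"
  proof (rule sum_mono)
    fix c
    show "(g c)^2 \<le> (int k - 1) * g c + (if c \<in> - range f then int k else 0)"
    proof (cases "c \<in> range f")
      case True
      have a: "g c \<ge> 0" using wpos[OF True] by (simp add: g_def)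
      have b: "g c \<le> int k - 1" using kle[of c] by (simp add: g_def)
      have "g c * (g c - (int k - 1)) \<le> 0" using a b by (simp add: mult_nonneg_nonpos)
      thus ?thesis using True by (simp add: power2_eq_square algebra_simps)
    next
      case False
      thus ?thesis using w0[OF False] by (simp add: g_def)
    qed
  qed
  also have "\<dots> = (int k - 1) * (\<Sum>c\<in>UNIV. g c) + (\<Sum>c\<in>UNIV. (if c \<in> - range f then int k else 0))"
    by (simp add: sum.distrib sum_distrib_left)
  also have "(\<Sum>c\<in>UNIV. (if c \<in> - range f then int k else 0)) = int k * int z"
    using sum.inter_restrict[OF finite_UNIV, of "\<lambda>_. int k" "- range f"] by (simp add: z_def mult.commute)
  finally have "(\<Sum>c\<in>UNIV. (g c)^2) \<le> int k * int z" using sumg by simp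
  with s2 have key: "M * (int k - 1) \<le> int k * int z" by linarith
  have rk: "real k > 0" using k1 by simp
  have keyr: "real_of_int M * (real k - 1) \<le> real k * real z"
  proof -
    have "real_of_int (M * (int k - 1)) \<le> real_of_int (int k * int z)" using key by (simp only: of_int_le_iff)
    thus ?thesis by simp
  qed
  have "(real k - 1) / real k * real_of_int M \<le> real z"
    using keyr rk by (simp add: divide_le_eq algebra_simps)
  moreover have "real_of_int M = 2 ^ ((n + 1) div 2)" by (simp add: M_def)
  moreover have "real (card (range f)) = 2^n - real z"
  proof -
    have "real (card (range f) + z) = real ((2::nat) ^ n)" using Iz by simp
    thus ?thesis by simp
  qed
  ultimately have part1: "real (card (range f)) \<le> 2 ^ n - (real k - 1) / real k * 2 ^ ((n + 1) div 2)"
    by simp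
  have part2: "card (range f) \<le> 2 ^ n - 2 ^ ((n - 1) div 2)" if nb: "\<not> bij f"
  proof -
    have "\<not> inj f" using nb finite_UNIV_inj_surj[of f] by (auto simp: bij_def)
    then obtain x y where xy: "x \<noteq> y" "f x = f y" by (auto simp: inj_def)
    have "{x, y} \<subseteq> f -` {f x}" using xy by auto
    hence "card {x, y} \<le> omega f (f x)" unfolding omega_def by (rule card_mono[rotated]) simp
    hence k2: "k \<ge> 2" using xy kle[of "f x"] by simp
    define P :: int where "P = 2 ^ ((n - 1) div 2)"
    have "(n + 1) div 2 = Suc ((n - 1) div 2)" using assms(2) by (auto elim!: oddE)
    hence MP: "M = 2 * P" unfolding M_def P_def by simp
    have zP: "int z \<ge> P"
    proof (rule ccontr)
      assume "\<not> int z \<ge> P"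
      hence "int z + 1 \<le> P" by simp
      hence "int k * (int z + 1) \<le> int k * P" by (rule mult_left_mono) simp
      moreover have "P * (int k - 2) \<ge> 0" using k2 by (simp add: P_def)
      moreover have "2 * P * (int k - 1) \<le> int k * int z" using key MP by simp
      ultimately show False using k2 by (simp add: algebra_simps)
    qed
    hence "int z \<ge> int (2 ^ ((n - 1) div 2))" unfolding P_def by simp
    hence "z \<ge> 2 ^ ((n - 1) div 2)" by (simp only: of_nat_le_iff)
    thus ?thesis using Iz by linarith
  qed
  show ?thesis using part1 part2 by blast
qed

end
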